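(* Let $N$ and $\tilde{N}$ be real symmetric matrices and $\epsilon\ge0$. If $I-\tilde{N}\approx_{\epsilon}I-N$ and $N$ is positive semidefinite, then $I+\tilde{N}\approx_{\epsilon}I+N$.
   Context: For real symmetric $X,Y$ and $\epsilon\ge0$, $X\approx_\epsilon Y$ means $(1-\epsilon)v^TYv\le v^TXv\le(1+\epsilon)v^TYv$ for all vectors $v$. *)

theory Defs
  imports "HOL-Analysis.Analysis"
begin

definition spec_approx :: "real^'n^'n \<Rightarrow> real \<Rightarrow> real^'n^'n \<Rightarrow> bool" where
  "spec_approx X eps Y \<longleftrightarrow>
     (\<forall>v::real^'n. (1 - eps) * (v \<bullet> (Y *v v)) \<le> v \<bullet> (X *v v)
                 \<and> v \<bullet> (X *v v) \<le> (1 + eps) * (v \<bullet> (Y *v v)))"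

definition psd :: "real^'n^'n \<Rightarrow> bool" where
  "psd A \<longleftrightarrow> (\<forall>v::real^'n. 0 \<le> v \<bullet> (A *v v))"

end

theory Submission
  imports Defs
begin

theorem claim1:
  fixes N Nt :: "real^'n^'n" and eps :: real
  assumes "transpose N = N" and "transpose Nt = Nt" and "eps \<ge> 0"
    and "spec_approx (mat 1 - Nt) eps (mat 1 - N)"
    and "psd N"
  shows "spec_approx (mat 1 + Nt) eps (mat 1 + N)"
  unfolding spec_approx_def
proof
  fix v :: "real^'n"
  have h: "(1 - eps) * (v \<bullet> v - v \<bullet> (N *v v)) \<le> v \<bullet> v - v \<bullet> (Nt *v v)
         \<and> v \<bullet> v - v \<bullet> (Nt *v v) \<le> (1 + eps) * (v \<bullet> v - v \<bullet> (N *v v))"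
    using assms(4) unfolding spec_approx_def
    by (simp add: matrix_vector_mult_diff_rdistrib inner_diff_right)
  have p: "0 \<le> v \<bullet> (N *v v)" using assms(5) unfolding psd_def by blast
  have e: "0 \<le> eps" by fact
  have "(1 - eps) * (v \<bullet> v + v \<bullet> (N *v v)) \<le> v \<bullet> v + v \<bullet> (Nt *v v)
         \<and> v \<bullet> v + v \<bullet> (Nt *v v) \<le> (1 + eps) * (v \<bullet> v + v \<bullet> (N *v v))"
    using h p e mult_nonneg_nonneg[OF e p] by (simp add: algebra_simps, linarith)
  then show "(1 - eps) * (v \<bullet> ((mat 1 + N) *v v)) \<le> v \<bullet> ((mat 1 + Nt) *v v) \<and>
         v \<bullet> ((mat 1 + Nt) *v v) \<le> (1 + eps) * (v \<bullet> ((mat 1 + N) *v v))"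
    by (simp add: matrix_vector_mult_add_rdistrib inner_add_right)
qed

end
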